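(* Let $n$ be odd and let $\mathcal S\subseteq\mathbb Z_3^{2n}$ be an isotropic subspace of dimension $n-1$, with $A(z)=\sum_{\chi\in\mathcal S}z^{\mathrm{wt}(\chi)}$ and $B(z)=\sum_{\chi\in\mathcal S^\perp}z^{\mathrm{wt}(\chi)}$. Then $3A(-1/2)+B(-1/2)=0$. If moreover $B(-1/2)\neq0$ and $3A'(-1/2)+B'(-1/2)=0$, then also $3A''(-1/2)+B''(-1/2)=0$, and consequently the function $$\epsilon'(\epsilon)=\frac{3\big(3A(z(\epsilon))+B(z(\epsilon))\big)}{4B(z(\epsilon))},\qquad z(\epsilon)=\frac{3-\epsilon}{8\epsilon-6},$$ satisfies $\epsilon'(\epsilon)=O(\epsilon^3)$ as $\epsilon\to0$.
   Context: For $\chi=(\vec u|\vec v)\in\mathbb Z_3^{2n}$, $\mathrm{wt}(\chi)=\#\{i:(u_i,v_i)\neq(0,0)\}$. The symplectic form is $[\chi,\chi']=\vec u\cdot\vec v'-\vec u'\cdot\vec v$; $\mathcal S$ isotropic means $[\chi,\chi']=0$ for all $\chi,\chi'\in\mathcal S$; $\mathcal S^\perp=\{\chi\in\mathbb Z_3^{2n}:[\chi,\sigma]=0\ \forall\sigma\in\mathcal S\}$. Primes denote derivatives in $z$. (Note $z(0)=-1/2$.) *)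

theory Defs
  imports "HOL-Analysis.Analysis" "HOL-Library.Landau_Symbols"
begin

text \<open>A vector chi = (u|v) in F^{2n} (F a field with 3 elements, i.e. Z_3) is modelled as
  a vector indexed by 'n + 'n: u_i = chi $ Inl i, v_i = chi $ Inr i, with n = CARD('n).\<close>

definition wt :: "'f::field ^ ('n::finite + 'n) \<Rightarrow> nat" where
  "wt chi = card {i :: 'n. chi $ Inl i \<noteq> 0 \<or> chi $ Inr i \<noteq> 0}"

definition symp :: "'f::field ^ ('n::finite + 'n) \<Rightarrow> 'f ^ ('n + 'n) \<Rightarrow> 'f" where
  "symp chi chi' = (\<Sum>i\<in>UNIV. chi $ Inl i * chi' $ Inr i) - (\<Sum>i\<in>UNIV. chi' $ Inl i * chi $ Inr i)"

definition isotropic :: "('f::field ^ ('n::finite + 'n)) set \<Rightarrow> bool" where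
  "isotropic S \<longleftrightarrow> (\<forall>chi\<in>S. \<forall>chi'\<in>S. symp chi chi' = 0)"

definition symp_perp :: "('f::field ^ ('n::finite + 'n)) set \<Rightarrow> ('f ^ ('n + 'n)) set" where
  "symp_perp S = {chi. \<forall>sigma\<in>S. symp chi sigma = 0}"

definition wenum :: "('f::field ^ ('n::finite + 'n)) set \<Rightarrow> real \<Rightarrow> real" where
  "wenum S z = (\<Sum>chi\<in>S. z ^ wt chi)"

end

theory Submission
  imports Defs "HOL-Computational_Algebra.Polynomial"
begin


lemma F3_facts:
  assumes "CARD('f::{field,finite}) = 3"
  shows "(UNIV::'f set) = {0,1,-1}" "(-1::'f) \<noteq> 0" "(-1::'f) \<noteq> 1" "(1::'f) + 1 = -1"
proof -
  have c: "card (UNIV - {0,1::'f}) = 1"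
    using assms by (subst card_Diff_subset) auto
  then obtain x where x: "UNIV - {0,1::'f} = {x}" using card_1_singleton_iff[THEN iffD1, OF c[unfolded One_nat_def]] by blast
  hence x0: "x \<noteq> 0" "x \<noteq> 1" by auto
  have h: "x + 1 = 0 \<or> x + 1 = 1"
  proof (rule ccontr)
    assume "\<not> (x + 1 = 0 \<or> x + 1 = 1)"
    hence "x + 1 \<in> UNIV - {0,1::'f}" by simp
    hence "x + 1 = x" unfolding x by simp
    thus False by simp
  qed
  have "x + 1 \<noteq> 1" using x0 by simp
  with h have "x + 1 = 0" by simp
  hence "x = -1" by (simp add: eq_neg_iff_add_eq_0)
  hence xm: "UNIV - {0,1::'f} = {-1}" using x by simp
  show U: "(UNIV::'f set) = {0,1,-1}"
  proof (rule set_eqI)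
    fix y :: 'f
    show "y \<in> UNIV \<longleftrightarrow> y \<in> {0,1,-1}"
    proof (cases "y \<in> {0,1}")
      case False
      hence "y \<in> UNIV - {0,1}" by simp
      thus ?thesis unfolding xm by simp
    qed auto
  qed
  have "(-1::'f) \<in> UNIV - {0,1}" unfolding xm by simp
  thus m0: "(-1::'f) \<noteq> 0" "(-1::'f) \<noteq> 1" by simp_all
  have "(1::'f) + 1 \<noteq> 0"
  proof
    assume "(1::'f) + 1 = 0"
    hence "(1::'f) = -1" by (simp add: eq_neg_iff_add_eq_0)
    thus False using m0 by simp
  qed
  moreover have "(1::'f) + 1 \<noteq> 1 + 0" by (subst add_left_cancel) simp
  ultimately have "(1::'f) + 1 \<in> UNIV - {0,1}" by simp
  thus "(1::'f) + 1 = -1" unfolding xm by simp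
qed

definition omg :: complex where "omg = Complex (-1/2) (sqrt 3 / 2)"

lemma omg_sq: "omg^2 = Complex (-1/2) (- sqrt 3 / 2)"
  by (simp add: omg_def power2_eq_square complex_eq_iff)

lemma omg_cube: "omg^3 = 1"
proof -
  have "omg^3 = omg^2 * omg" by (simp add: power3_eq_cube power2_eq_square)
  also have "\<dots> = 1" unfolding omg_sq by (simp add: omg_def complex_eq_iff)
  finally show ?thesis .
qed

lemma omg_sum: "1 + omg + omg^2 = 0"
  unfolding omg_sq by (simp add: omg_def complex_eq_iff)

lemma omg_ne1: "omg \<noteq> 1" "omg^2 \<noteq> 1"
  unfolding omg_sq by (auto simp: omg_def complex_eq_iff)

definition psi :: "'f::{field,finite} \<Rightarrow> complex" where
  "psi a = (if a = 0 then 1 else if a = 1 then omg else omg^2)"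

lemma psi_add:
  assumes "CARD('f::{field,finite}) = 3"
  shows "psi ((a::'f) + b) = psi a * psi b"
proof -
  note F = F3_facts[OF assms]
  have mm: "(-1::'f) + -1 = 1" using F(4) by (metis add.inverse_inverse minus_add_distrib)
  have o4: "omg^2 * omg^2 = omg" proof -
    have "omg^2 * omg^2 = omg^3 * omg" by (simp add: power2_eq_square power3_eq_cube mult.assoc)
    thus ?thesis using omg_cube by simp
  qed
  have o3: "omg * omg^2 = 1" "omg^2 * omg = 1" using omg_cube by (simp_all add: power3_eq_cube power2_eq_square mult.assoc)
  have p: "psi (0::'f) = 1" "psi (1::'f) = omg" "psi (-1::'f) = omg^2" using F(2,3) by (simp_all add: psi_def)
  have ss: "(1::'f)+1 = -1" "(-1::'f) + -1 = 1" "(1::'f) + -1 = 0" "(-1::'f)+1 = 0" using F(4) mm by simp_all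
  have o2: "omg * omg = omg^2" by (simp add: power2_eq_square)
  have "a = 0 \<or> a = 1 \<or> a = -1" "b = 0 \<or> b = 1 \<or> b = -1" using F(1) by auto
  thus ?thesis
    by (elim disjE) (simp_all only: ss p o2 o3 o4 add_0_left add_0_right mult_1_left mult_1_right)
qed


lemma psi_zero[simp]: "psi 0 = 1" by (simp add: psi_def)

lemma psi_sum:
  assumes "CARD('f::{field,finite}) = 3" "finite A"
  shows "psi (\<Sum>x\<in>A. (f x :: 'f)) = (\<Prod>x\<in>A. psi (f x))"
  using assms(2) by (induction A rule: finite_induct) (simp_all add: psi_add[OF assms(1)])

lemma psi_ne1:
  assumes "CARD('f::{field,finite}) = 3" "(c::'f) \<noteq> 0"
  shows "psi c \<noteq> 1"
proof -
  note F = F3_facts[OF assms(1)]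
  have "c = 1 \<or> c = -1" using F(1) assms(2) by auto
  thus ?thesis using F(2,3) omg_ne1 by (auto simp: psi_def)
qed

lemma psi_sum_zero:
  assumes "CARD('f::{field,finite}) = 3" "(c::'f) \<noteq> 0"
  shows "(\<Sum>a\<in>UNIV. psi (a * c)) = 0"
proof -
  note F = F3_facts[OF assms(1)]
  have d: "(0::'f) \<notin> {1,-1}" "(1::'f) \<notin> {-1}" using F(2,3) by auto
  have p: "psi (0::'f) = 1" "psi (1::'f) = omg" "psi (-1::'f) = omg^2" using F(2,3) by (simp_all add: psi_def)
  have "(\<Sum>a\<in>UNIV. psi (a * c)) = psi 0 + psi c + psi (- c)"
    unfolding F(1) using d by (simp add: add.assoc)
  moreover have "c = 1 \<or> c = -1" using F(1) assms(2) by auto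
  ultimately show ?thesis using omg_sum p by (auto simp: algebra_simps)
qed

lemma factor_sum:
  assumes "CARD('f::{field,finite}) = 3"
  shows "(\<Sum>p\<in>UNIV. complex_of_real (if p \<noteq> (0,0) then z else 1) * psi (fst p * (y::'f) - x * snd p))
         = complex_of_real (if (x,y) = (0,0) then 1 + 8*z else 1 - z)"
proof -
  define g where "g p = psi (fst p * y - x * snd p)" for p :: "'f \<times> 'f"
  have split: "complex_of_real (if p \<noteq> (0,0) then z else 1) * g p
      = complex_of_real z * g p + (if p = (0,0) then complex_of_real (1 - z) * g p else 0)" for p
    by (auto simp: algebra_simps)
  have "(\<Sum>p\<in>UNIV. complex_of_real (if p \<noteq> (0,0) then z else 1) * g p)
      = complex_of_real z * (\<Sum>p\<in>UNIV. g p) + complex_of_real (1 - z)"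
    unfolding split sum.distrib by (simp add: sum_distrib_left g_def)
  moreover have gs: "(\<Sum>p\<in>UNIV. g p) = (\<Sum>a\<in>UNIV. psi (a * y)) * (\<Sum>b\<in>UNIV. psi (b * (-x)))"
  proof -
    have "g p = psi (fst p * y) * psi (snd p * (-x))" for p
      unfolding g_def by (subst psi_add[OF assms, symmetric]) (simp add: algebra_simps)
    hence "(\<Sum>p\<in>UNIV. g p) = (\<Sum>(a,b)\<in>UNIV \<times> UNIV. psi (a * y) * psi (b * (-x)))"
      by (simp add: case_prod_beta)
    also have "\<dots> = (\<Sum>a\<in>UNIV. \<Sum>b\<in>UNIV. psi (a * y) * psi (b * (-x)))"
      by (rule sum.cartesian_product[symmetric])
    also have "\<dots> = (\<Sum>a\<in>UNIV. psi (a * y)) * (\<Sum>b\<in>UNIV. psi (b * (-x)))"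
      by (simp add: sum_product)
    finally show ?thesis .
  qed
  moreover have "(\<Sum>p\<in>UNIV. g p) = (if (x,y) = (0,0) then 9 else 0)"
  proof (cases "(x,y) = (0,0)")
    case True
    hence "(\<Sum>p\<in>UNIV. g p) = of_nat (card (UNIV :: ('f \<times> 'f) set))" by (simp add: g_def)
    also have "card (UNIV :: ('f \<times> 'f) set) = 9" 
    proof -
      have "card (UNIV :: ('f \<times> 'f) set) = card ((UNIV::'f set) \<times> (UNIV::'f set))" by simp
      also have "\<dots> = 9" using assms by (simp only: card_cartesian_product)
      finally show ?thesis .
    qed
    finally show ?thesis using True by simp
  next
    case False
    hence "y \<noteq> 0 \<or> - x \<noteq> 0" by auto
    thus ?thesis unfolding gs using False psi_sum_zero[OF assms, of y] psi_sum_zero[OF assms, of "-x"]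
      by (auto simp del: mult_minus_right)
  qed
  ultimately show ?thesis unfolding g_def by (auto simp: algebra_simps)
qed


lemma prod_pow:
  fixes P :: "'n::finite \<Rightarrow> bool"
  shows "(\<Prod>i\<in>UNIV. if P i then (z::'a::comm_monoid_mult) else 1) = z ^ card {i. P i}"
  by (simp add: prod.If_cases)

lemma symp_expand: "symp chi s = (\<Sum>i\<in>UNIV. chi $ Inl i * s $ Inr i - s $ Inl i * chi $ Inr i)"
  by (simp add: symp_def sum_subtractf)

lemma symp_add2: "symp chi (a + b) = symp chi a + symp chi b"
  by (simp add: symp_def sum.distrib algebra_simps)

lemma inner_sum:
  fixes s :: "'f::{field,finite} ^ ('n::finite + 'n)"
  assumes F3: "CARD('f) = 3"
  shows "(\<Sum>chi\<in>UNIV. complex_of_real (z ^ wt chi) * psi (symp chi s))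
       = complex_of_real ((1 + 8*z) ^ (CARD('n) - wt s) * (1 - z) ^ (wt s))"
proof -
  define G where "G i p = complex_of_real (if p \<noteq> (0,0) then z else 1) * psi (fst p * s $ Inr i - s $ Inl i * snd p)"
    for i :: 'n and p :: "'f \<times> 'f"
  have 1: "complex_of_real (z ^ wt chi) * psi (symp chi s) = (\<Prod>i\<in>UNIV. G i (chi $ Inl i, chi $ Inr i))"
    for chi :: "'f ^ ('n + 'n)"
  proof -
    have a: "z ^ wt chi = (\<Prod>i\<in>UNIV. if (chi $ Inl i, chi $ Inr i) \<noteq> (0,0) then z else 1)"
      unfolding prod_pow wt_def by simp
    have b: "psi (symp chi s) = (\<Prod>i\<in>UNIV. psi (chi $ Inl i * s $ Inr i - s $ Inl i * chi $ Inr i))"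
      unfolding symp_expand by (simp add: psi_sum[OF F3])
    show ?thesis unfolding a b of_real_prod prod.distrib[symmetric] G_def by simp
  qed
  have 2: "(\<Sum>chi\<in>UNIV. \<Prod>i\<in>UNIV. G i (chi $ Inl i, chi $ Inr i)) = (\<Sum>g\<in>UNIV. \<Prod>i\<in>UNIV. G i (g i))"
  proof (rule sum.reindex_bij_witness[of UNIV "\<lambda>g. (\<chi> k. case k of Inl i \<Rightarrow> fst (g i) | Inr i \<Rightarrow> snd (g i))"
        "\<lambda>chi i. (chi $ Inl i, chi $ Inr i)"])
    fix chi :: "'f ^ ('n + 'n)"
    show "(\<chi> k. case k of Inl i \<Rightarrow> fst ((\<lambda>i. (chi $ Inl i, chi $ Inr i)) i) | Inr i \<Rightarrow> snd ((\<lambda>i. (chi $ Inl i, chi $ Inr i)) i)) = chi"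
      by (simp add: vec_eq_iff split: sum.split)
  qed (auto simp: fun_eq_iff)
  have 3: "(\<Sum>g\<in>UNIV. \<Prod>i\<in>UNIV. G i (g i)) = (\<Prod>i\<in>UNIV. \<Sum>p\<in>UNIV. G i p)"
    using prod_sum_PiE[of "UNIV :: 'n set" "\<lambda>_. UNIV" G] by simp
  have 4: "(\<Sum>p\<in>UNIV. G i p) = complex_of_real (if (s $ Inl i, s $ Inr i) = (0,0) then 1 + 8*z else 1 - z)" for i
    unfolding G_def by (rule factor_sum[OF F3])
  define W where "W = {i. s $ Inl i \<noteq> 0 \<or> s $ Inr i \<noteq> 0}"
  have wW: "wt s = card W" by (simp add: wt_def W_def)
  have c1: "card {i. (s $ Inl i, s $ Inr i) = (0,0)} = CARD('n) - wt s"
  proof -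
    have "{i. (s $ Inl i, s $ Inr i) = (0,0)} = UNIV - W" by (auto simp: W_def)
    thus ?thesis by (simp add: card_Diff_subset wW)
  qed
  have c2: "UNIV \<inter> - {i. (s $ Inl i, s $ Inr i) = (0,0)} = W" by (auto simp: W_def)
  have 5: "(\<Prod>i\<in>UNIV. complex_of_real (if (s $ Inl i, s $ Inr i) = (0,0) then 1 + 8*z else 1 - z))
      = complex_of_real ((1 + 8*z) ^ (CARD('n) - wt s) * (1 - z) ^ (wt s))"
  proof -
    have fU: "finite (UNIV :: 'n set)" by simp
    show ?thesis unfolding of_real_prod[symmetric] prod.If_cases[OF fU] c2
      using c1 by (simp add: wW)
  qed
  show ?thesis unfolding 1 2 3 4 5 ..
qed

lemma char_sum:
  fixes S :: "('f::{field,finite} ^ ('n::finite + 'n)) set"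
  assumes F3: "CARD('f) = 3" and sub: "vec.subspace S"
  shows "(\<Sum>s\<in>S. psi (symp chi s)) = (if chi \<in> symp_perp S then of_nat (card S) else 0)"
proof (cases "chi \<in> symp_perp S")
  case True
  hence "\<forall>s\<in>S. symp chi s = 0" by (simp add: symp_perp_def)
  thus ?thesis using True by simp
next
  case False
  then obtain s0 where s0: "s0 \<in> S" "symp chi s0 \<noteq> 0" by (auto simp: symp_perp_def)
  have "(\<Sum>s\<in>S. psi (symp chi (s + s0))) = (\<Sum>s\<in>S. psi (symp chi s))"
    by (rule sum.reindex_bij_witness[of S "\<lambda>t. t - s0" "\<lambda>s. s + s0"])
       (auto simp: vec.subspace_add[OF sub] vec.subspace_diff[OF sub] s0)
  hence "psi (symp chi s0) * (\<Sum>s\<in>S. psi (symp chi s)) = (\<Sum>s\<in>S. psi (symp chi s))"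
    by (simp add: symp_add2 psi_add[OF F3] sum_distrib_left mult.commute)
  hence "(psi (symp chi s0) - 1) * (\<Sum>s\<in>S. psi (symp chi s)) = 0" by (simp add: algebra_simps)
  thus ?thesis using psi_ne1[OF F3 s0(2)] False by simp
qed

lemma macwilliams:
  fixes S :: "('f::{field,finite} ^ ('n::finite + 'n)) set"
  assumes F3: "CARD('f) = 3" and sub: "vec.subspace S"
  shows "real (card S) * wenum (symp_perp S) z = (\<Sum>s\<in>S. (1 + 8*z) ^ (CARD('n) - wt s) * (1 - z) ^ (wt s))"
proof -
  have "complex_of_real (real (card S) * wenum (symp_perp S) z)
      = (\<Sum>chi\<in>UNIV. complex_of_real (z ^ wt chi) * (if chi \<in> symp_perp S then of_nat (card S) else 0))"
  proof -
    have "(\<Sum>chi\<in>UNIV. complex_of_real (z ^ wt chi) * (if chi \<in> symp_perp S then of_nat (card S) else 0))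
        = (\<Sum>chi\<in>UNIV. if chi \<in> symp_perp S then of_nat (card S) * complex_of_real (z ^ wt chi) else 0)"
      by (rule sum.cong) auto
    also have "\<dots> = (\<Sum>chi\<in>UNIV \<inter> symp_perp S. of_nat (card S) * complex_of_real (z ^ wt chi))"
      by (rule sum.inter_restrict[symmetric]) simp
    finally show ?thesis by (simp add: wenum_def sum_distrib_left)
  qed
  also have "\<dots> = (\<Sum>chi\<in>UNIV. \<Sum>s\<in>S. complex_of_real (z ^ wt chi) * psi (symp chi s))"
    by (simp add: char_sum[OF F3 sub] flip: sum_distrib_left)
  also have "\<dots> = (\<Sum>s\<in>S. \<Sum>chi\<in>UNIV. complex_of_real (z ^ wt chi) * psi (symp chi s))"
    by (rule sum.swap)
  also have "\<dots> = (\<Sum>s\<in>S. complex_of_real ((1 + 8*z) ^ (CARD('n) - wt s) * (1 - z) ^ (wt s)))"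
    by (rule sum.cong[OF refl], rule inner_sum[OF F3])
  also have "\<dots> = complex_of_real (\<Sum>s\<in>S. (1 + 8*z) ^ (CARD('n) - wt s) * (1 - z) ^ (wt s))"
    by (simp only: of_real_sum)
  finally show ?thesis by (simp only: of_real_eq_iff)
qed


lemma card_subspace:
  fixes S :: "('f::{field,finite} ^ 'm::finite) set"
  assumes sub: "vec.subspace S"
  shows "card S = CARD('f) ^ vec.dim S"
proof -
  obtain B where B: "B \<subseteq> S" "vec.independent B" "S \<subseteq> vec.span B" "card B = vec.dim S"
    by (rule vec.basis_exists)
  have fB: "finite B" by simp
  have SB: "vec.span B = S" using vec.span_subspace[OF B(1) B(3) sub] .
  define L where "L u = (\<Sum>v\<in>B. u v *s v)" for u :: "('f ^ 'm) \<Rightarrow> 'f"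
  have img: "vec.span B = L ` (PiE B (\<lambda>_. UNIV))"
  proof -
    have "range L \<subseteq> L ` (PiE B (\<lambda>_. UNIV))"
    proof
      fix x assume "x \<in> range L"
      then obtain u where x: "x = L u" by auto
      have r1: "L (restrict u B) = L u" unfolding L_def by (rule sum.cong) auto
      have r2: "restrict u B \<in> PiE B (\<lambda>_. UNIV)" by simp
      show "x \<in> L ` (PiE B (\<lambda>_. UNIV))"
        by (rule image_eqI[where x="restrict u B"]) (simp_all only: x r1 r2)
    qed
    moreover have "vec.span B = range L" unfolding L_def by (rule vec.span_finite[OF fB])
    moreover have "L ` (PiE B (\<lambda>_. UNIV)) \<subseteq> range L" by (rule image_mono) simp
    ultimately show ?thesis by (simp only: subset_antisym)
  qed
  have inj: "inj_on L (PiE B (\<lambda>_. UNIV))"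
  proof (rule inj_onI)
    fix u u' assume u: "u \<in> PiE B (\<lambda>_. UNIV)" "u' \<in> PiE B (\<lambda>_. UNIV)" and eq: "L u = L u'"
    have "(\<Sum>v\<in>B. (u v - u' v) *s v) = (\<Sum>v\<in>B. u v *s v - u' v *s v)"
      by (rule sum.cong[OF refl]) (rule vec.scale_left_diff_distrib)
    also have "\<dots> = L u - L u'" unfolding L_def by (rule sum_subtractf)
    finally have z: "(\<Sum>v\<in>B. (u v - u' v) *s v) = 0" using eq by simp
    have "\<forall>v\<in>B. u v = u' v"
    proof (rule ccontr)
      assume "\<not> (\<forall>v\<in>B. u v = u' v)"
      hence ex: "\<exists>v\<in>B. u v - u' v \<noteq> 0" by auto
      have "vec.dependent B" unfolding vec.dependent_finite[OF fB]
        by (rule exI[where x="\<lambda>v. u v - u' v"]) (use ex z in simp)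
      thus False using B(2) by simp
    qed
    thus "u = u'" by (intro PiE_ext[OF u(1) u(2)]) simp
  qed
  have "card S = card (PiE B (\<lambda>_. (UNIV :: 'f set)))"
    using card_image[OF inj] img SB by simp
  also have "\<dots> = CARD('f) ^ card B" by (simp add: card_PiE fB)
  finally show ?thesis using B(4) by simp
qed



lemma alg_core:
  fixes a a1 b b1 U X X2 V Y Y2 K Z1 Z2 c n :: real
  assumes h0: "a*a1 = a*(a-1)" "b*b1 = b*(b-1)"
    and h1: "a*X*(-3) = a*U" and h2: "a*a1*X2*9 = a*a1*U"
    and h3: "b*Y*3 = 2*(b*V)" and h4: "b*b1*Y2*9 = 4*(b*b1*V)"
    and h5: "b*Z1 = -2*(b*K)" and h6: "b*b1*Z2 = 4*(b*b1*K)"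
    and h7: "c*U*V = -3*K" and h8: "a + b = n"
  shows "3*(b*b1*Z2) + c*(64*a*a1*X2*V - 16*a*b*X*Y + b*b1*U*Y2)
       = 8*(1-n)/3*(3*(b*Z1) + c*(8*a*X*V - b*U*Y))"
  using assms by algebra


definition g0 :: "nat \<Rightarrow> nat \<Rightarrow> real \<Rightarrow> real" where
  "g0 n w z = (1 + 8*z)^(n-w) * (1-z)^w"
definition g1 :: "nat \<Rightarrow> nat \<Rightarrow> real \<Rightarrow> real" where
  "g1 n w z = 8 * real (n-w) * (1 + 8*z)^(n-w-1) * (1-z)^w - real w * (1 + 8*z)^(n-w) * (1-z)^(w-1)"
definition g2 :: "nat \<Rightarrow> nat \<Rightarrow> real \<Rightarrow> real" where
  "g2 n w z = 64 * real (n-w) * real (n-w-1) * (1 + 8*z)^(n-w-2) * (1-z)^w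
     - 16 * real (n-w) * real w * (1 + 8*z)^(n-w-1) * (1-z)^(w-1)
     + real w * real (w-1) * (1 + 8*z)^(n-w) * (1-z)^(w-2)"
definition p1 :: "nat \<Rightarrow> real \<Rightarrow> real" where "p1 w z = real w * z^(w-1)"
definition p2 :: "nat \<Rightarrow> real \<Rightarrow> real" where "p2 w z = real w * real (w-1) * z^(w-2)"

lemma d_aff: "((\<lambda>x::real. (1 + 8*x)^k) has_real_derivative (real k * (1 + 8*x)^(k-1) * 8)) (at x)"
  by (auto intro!: derivative_eq_intros)

lemma d_sub: "((\<lambda>x::real. (1 - x)^k) has_real_derivative (- (real k * (1 - x)^(k-1)))) (at x)"
  by (auto intro!: derivative_eq_intros)

lemma d_p0: "((\<lambda>x. x^w) has_real_derivative p1 w x) (at x)"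
  unfolding p1_def using DERIV_pow[of w x UNIV] by simp

lemma d_p1: "(p1 w has_real_derivative p2 w x) (at x)"
proof -
  have "((\<lambda>x. real w * x^(w-1)) has_real_derivative real w * (real (w-1) * x^(w-1-1))) (at x)"
    by (intro DERIV_cmult) (use DERIV_pow[of "w-1" x UNIV] in simp)
  thus ?thesis unfolding p1_def[abs_def] p2_def by (simp add: diff_diff_left algebra_simps numeral_2_eq_2)
qed

lemma d_g0: "(g0 n w has_real_derivative g1 n w x) (at x)"
proof -
  have "((\<lambda>x. (1 + 8*x)^(n-w) * (1-x)^w) has_real_derivative
      (real (n-w) * (1 + 8*x)^(n-w-1) * 8) * (1-x)^w + (- (real w * (1 - x)^(w-1))) * (1 + 8*x)^(n-w)) (at x)"
    by (rule DERIV_mult[OF d_aff d_sub])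
  thus ?thesis unfolding g0_def[abs_def] g1_def by (simp add: algebra_simps)
qed

lemma d_g1: "(g1 n w has_real_derivative g2 n w x) (at x)"
proof -
  have a: "((\<lambda>x. (1 + 8*x)^(n-w-1) * (1-x)^w) has_real_derivative
      (real (n-w-1) * (1 + 8*x)^(n-w-1-1) * 8) * (1-x)^w + (- (real w * (1 - x)^(w-1))) * (1 + 8*x)^(n-w-1)) (at x)"
    by (rule DERIV_mult[OF d_aff d_sub])
  have b: "((\<lambda>x. (1 + 8*x)^(n-w) * (1-x)^(w-1)) has_real_derivative
      (real (n-w) * (1 + 8*x)^(n-w-1) * 8) * (1-x)^(w-1) + (- (real (w-1) * (1 - x)^(w-1-1))) * (1 + 8*x)^(n-w)) (at x)"
    by (rule DERIV_mult[OF d_aff d_sub])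
  have "((\<lambda>x. 8 * real (n-w) * ((1 + 8*x)^(n-w-1) * (1-x)^w) - real w * ((1 + 8*x)^(n-w) * (1-x)^(w-1)))
      has_real_derivative
      8 * real (n-w) * ((real (n-w-1) * (1 + 8*x)^(n-w-1-1) * 8) * (1-x)^w + (- (real w * (1 - x)^(w-1))) * (1 + 8*x)^(n-w-1))
      - real w * ((real (n-w) * (1 + 8*x)^(n-w-1) * 8) * (1-x)^(w-1) + (- (real (w-1) * (1 - x)^(w-1-1))) * (1 + 8*x)^(n-w))) (at x)"
    by (intro DERIV_diff DERIV_cmult a b)
  thus ?thesis unfolding g1_def[abs_def] g2_def by (simp add: diff_diff_left algebra_simps numeral_2_eq_2)
qed


lemma pw1: "real k * x^(k-1) * x = real k * (x::real)^k"
  by (cases k) auto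

lemma pw2: "real k * real (k-1) * x^(k-2) * x^2 = real k * real (k-1) * (x::real)^k"
proof (cases k)
  case (Suc j)
  thus ?thesis by (cases j) (auto simp: power2_eq_square)
qed simp

lemma nm1: "real k * real (k-1) = real k * (real k - 1)"
  by (cases k) auto

lemma key_pow:
  assumes "odd n" "w \<le> n"
  shows "(1/3^(n-1)) * ((-3::real)^(n-w) * (3/2)^w) = -3 * (-1/2)^w"
proof -
  have n: "n = (n-1) + 1" using assms(1) by (cases n) auto
  have s: "(-1::real)^(n-w) * (-1)^w = -1"
    using assms by (simp add: power_add[symmetric])
  have ww: "(-1::real)^w * (-1)^w = 1" by (simp add: power_add[symmetric])
  have m: "(-1::real)^(n-w) = - ((-1)^w)"
  proof -
    have "(-1::real)^(n-w) = (-1)^(n-w) * ((-1)^w * (-1)^w)" using ww by simp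
    also have "\<dots> = ((-1)^(n-w) * (-1)^w) * (-1)^w" by (simp add: mult.assoc)
    finally show ?thesis using s by simp
  qed
  have e1: "(-3::real)^(n-w) = (-1)^(n-w) * 3^(n-w)" by (simp flip: power_mult_distrib)
  have e2: "(3/2::real)^w = 3^w / 2^w" by (simp add: power_divide)
  have e3: "(-1/2::real)^w = (-1)^w / 2^w" using power_divide[of "-1::real" 2 w] by simp
  have e4: "(3::real)^(n-w) * 3^w = 3 * 3^(n-1)"
  proof -
    have "(3::real)^(n-w) * 3^w = 3^n" using assms(2) by (simp add: power_add[symmetric])
    also have "\<dots> = 3 * 3^(n-1)" using assms(1) by (cases n) auto
    finally show ?thesis .
  qed
  have abs: "1/P * ((- S) * Q * (R/T)) = -3 * (S/T)" if "Q*R = 3*P" "P \<noteq> 0" "T \<noteq> 0"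
    for P Q R S T :: real
  proof -
    have "1/P * ((- S) * Q * (R/T)) = - (S * (Q*R)) / (P*T)" by (simp add: field_simps)
    also have "\<dots> = -3 * (S/T)" using that by (simp add: field_simps)
    finally show ?thesis .
  qed
  show ?thesis unfolding e1 e2 e3 m
    by (rule abs[OF e4]) simp_all
qed

lemma vals:
  assumes "odd n" "w \<le> n"
  shows "3*(-1/2::real)^w + (1/3^(n-1)) * g0 n w (-1/2) = 0"
    "3 * p2 w (-1/2) + (1/3^(n-1)) * g2 n w (-1/2)
       = 8*(1 - real n)/3 * (3 * p1 w (-1/2) + (1/3^(n-1)) * g1 n w (-1/2))"
proof -
  define a a1 b b1 where a_def: "a = real (n-w)" and a1_def: "a1 = real (n-w-1)" and b_def: "b = real w" and b1_def: "b1 = real (w-1)"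
  define U X X2 where U_def: "U = (-3::real)^(n-w)" and X_def: "X = (-3::real)^(n-w-1)" and X2_def: "X2 = (-3::real)^(n-w-2)"
  define V Y Y2 where V_def: "V = (3/2::real)^w" and Y_def: "Y = (3/2::real)^(w-1)" and Y2_def: "Y2 = (3/2::real)^(w-2)"
  define K Z1 Z2 where K_def: "K = (-1/2::real)^w" and Z1_def: "Z1 = (-1/2::real)^(w-1)" and Z2_def: "Z2 = (-1/2::real)^(w-2)"
  define c where "c = (1/3^(n-1) :: real)"
  have u: "1 + 8 * (-1/2) = (-3::real)" "1 - (-1/2) = (3/2::real)" by simp_all
  have g0v: "g0 n w (-1/2) = U*V" unfolding g0_def u U_def V_def ..
  have g1v: "g1 n w (-1/2) = 8*a*X*V - b*U*Y" unfolding g1_def u a_def b_def U_def V_def X_def Y_def ..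
  have g2v: "g2 n w (-1/2) = 64*a*a1*X2*V - 16*a*b*X*Y + b*b1*U*Y2"
    unfolding g2_def u a_def a1_def b_def b1_def U_def V_def X_def X2_def Y_def Y2_def ..
  have p1v: "p1 w (-1/2) = b*Z1" unfolding p1_def b_def Z1_def ..
  have p2v: "p2 w (-1/2) = b*b1*Z2" unfolding p2_def b_def b1_def Z2_def ..
  have h0: "a*a1 = a*(a-1)" "b*b1 = b*(b-1)" unfolding a_def a1_def b_def b1_def
    using nm1[of "n-w"] nm1[of w] by (simp_all add: diff_diff_left)
  have h1: "a*X*(-3) = a*U" unfolding a_def X_def U_def by (rule pw1)
  have sq: "(-3::real)^2 = 9" "(3/2::real)^2 = 9/4" "(-1/2::real)^2 = 1/4" by (simp_all add: power_divide)
  have h2: "a*a1*X2*9 = a*a1*U" using pw2[of "n-w" "-3"] unfolding a_def a1_def X2_def U_def sq .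
  have br: "P*(3/2) = Q \<Longrightarrow> P*3 = 2*Q" "P*(9/4) = Q \<Longrightarrow> P*9 = 4*Q"
    "P*(-1/2) = Q \<Longrightarrow> P = -2*Q" "P*(1/4) = Q \<Longrightarrow> P = 4*Q" for P Q :: real by linarith+
  have h3': "b*Y*(3/2) = b*V" unfolding b_def Y_def V_def by (rule pw1)
  have h4': "b*b1*Y2*(9/4) = b*b1*V" using pw2[of w "3/2"] unfolding b_def b1_def Y2_def V_def sq .
  have h5': "b*Z1*(-1/2) = b*K" unfolding b_def Z1_def K_def by (rule pw1)
  have h6': "b*b1*Z2*(1/4) = b*b1*K" using pw2[of w "-1/2"] unfolding b_def b1_def Z2_def K_def sq .
  note h3 = br(1)[OF h3'] and h4 = br(2)[OF h4'] and h5 = br(3)[OF h5'] and h6 = br(4)[OF h6']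
  have h7: "c*U*V = -3*K" using key_pow[OF assms] unfolding c_def U_def V_def K_def by simp
  have h8: "a + b = real n" unfolding a_def b_def using assms(2) by simp
  show "3*(-1/2::real)^w + (1/3^(n-1)) * g0 n w (-1/2) = 0"
    using h7 unfolding g0v c_def[symmetric] K_def[symmetric] by (simp add: mult.assoc)
  show "3 * p2 w (-1/2) + (1/3^(n-1)) * g2 n w (-1/2)
       = 8*(1 - real n)/3 * (3 * p1 w (-1/2) + (1/3^(n-1)) * g1 n w (-1/2))"
    unfolding g1v g2v p1v p2v c_def[symmetric]
    by (rule alg_core[OF h0 h1 h2 h3 h4 h5 h6 h7 h8])
qed



lemma poly_cubic:
  fixes p :: "real poly"
  assumes "poly p c = 0" "poly (pderiv p) c = 0" "poly (pderiv (pderiv p)) c = 0"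
  shows "\<exists>M. \<forall>x. \<bar>x - c\<bar> \<le> 1 \<longrightarrow> \<bar>poly p x\<bar> \<le> M * \<bar>x - c\<bar>^3"
proof -
  define q where "q = pderiv (pderiv (pderiv p))"
  have "compact ((\<lambda>x. poly q x) ` {c-1..c+1})"
    by (intro compact_continuous_image continuous_on_poly continuous_on_id compact_Icc)
  then obtain M0 where M0: "\<forall>y\<in>(\<lambda>x. poly q x) ` {c-1..c+1}. norm y \<le> M0"
    using compact_imp_bounded bounded_iff by metis
  have "\<bar>poly p x\<bar> \<le> M0/6 * \<bar>x - c\<bar>^3" if x: "\<bar>x - c\<bar> \<le> 1" for x
  proof (cases "x = c")
    case True thus ?thesis using assms by simp
  next
    case False
    define diff where "diff m = poly ((pderiv^^m) p)" for m
    have "\<exists>t. (if x < c then x < t \<and> t < c else c < t \<and> t < x) \<and>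
      poly p x = (\<Sum>m<3. diff m c / fact m * (x - c)^m) + diff 3 t / fact 3 * (x - c)^3"
    proof (rule Taylor[where a="c-1" and b="c+1"])
      show "diff 0 = poly p" by (simp add: diff_def)
      show "\<forall>m t. m < 3 \<and> c - 1 \<le> t \<and> t \<le> c + 1 \<longrightarrow> DERIV (diff m) t :> diff (Suc m) t"
        unfolding diff_def using poly_DERIV by (simp add: fun_eq_iff)
    qed (use x False in auto)
    then obtain t where t: "(if x < c then x < t \<and> t < c else c < t \<and> t < x)"
      and tay: "poly p x = (\<Sum>m<3. diff m c / fact m * (x - c)^m) + diff 3 t / fact 3 * (x - c)^3"
      by blast
    have "(\<Sum>m<3. diff m c / fact m * (x - c)^m) = 0"
      using assms by (simp add: eval_nat_numeral diff_def)
    moreover have "diff 3 t = poly q t" by (simp add: diff_def q_def eval_nat_numeral)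
    ultimately have eq: "poly p x = poly q t / 6 * (x - c)^3" using tay by (simp add: eval_nat_numeral)
    have "t \<in> {c-1..c+1}" using t x by (auto split: if_splits)
    hence "\<bar>poly q t\<bar> \<le> M0" using M0 by auto
    hence "\<bar>poly q t\<bar> / 6 * \<bar>x - c\<bar>^3 \<le> M0 / 6 * \<bar>x - c\<bar>^3"
      by (intro mult_right_mono divide_right_mono) auto
    thus ?thesis unfolding eq by (simp add: abs_mult power_abs)
  qed
  thus ?thesis by blast
qed


theorem mainTheorem6:
  fixes S :: "('f::{field,finite} ^ ('n::finite + 'n)) set"
    and A B :: "real \<Rightarrow> real"
  assumes F3: "CARD('f) = 3"
    and n_odd: "odd CARD('n)"
    and sub: "vec.subspace S"
    and dimS: "vec.dim S = CARD('n) - 1"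
    and iso: "isotropic S"
    and A_def: "A = wenum S"
    and B_def: "B = wenum (symp_perp S)"
  shows "3 * A (-1/2) + B (-1/2) = 0 \<and>
    ((B (-1/2) \<noteq> 0 \<and> 3 * deriv A (-1/2) + deriv B (-1/2) = 0) \<longrightarrow>
       (3 * (deriv ^^ 2) A (-1/2) + (deriv ^^ 2) B (-1/2) = 0 \<and>
        (\<lambda>e::real. let z = (3 - e) / (8 * e - 6) in 3 * (3 * A z + B z) / (4 * B z))
          \<in> O[at 0](\<lambda>e. e ^ 3)))"
proof -
  define n where "n = CARD('n)"
  define c :: real where "c = 1/3^(n-1)"
  have cardS: "card S = 3^(n-1)" using card_subspace[OF sub] F3 dimS n_def by simp
  have wtn: "wt s \<le> n" for s :: "'f ^ ('n + 'n)"
    unfolding wt_def n_def by (rule card_mono) auto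
  have Aeq: "A = (\<lambda>z. \<Sum>s\<in>S. z ^ wt s)" unfolding A_def wenum_def[abs_def] ..
  have Beq: "B = (\<lambda>z. c * (\<Sum>s\<in>S. g0 n (wt s) z))"
  proof
    fix z
    have "real (card S) * B z = (\<Sum>s\<in>S. g0 n (wt s) z)"
      unfolding B_def macwilliams[OF F3 sub] g0_def n_def ..
    thus "B z = c * (\<Sum>s\<in>S. g0 n (wt s) z)" unfolding cardS c_def by (simp add: field_simps)
  qed
  define A1 where "A1 z = (\<Sum>s\<in>S. p1 (wt s) z)" for z
  define A2 where "A2 z = (\<Sum>s\<in>S. p2 (wt s) z)" for z
  define B1 where "B1 z = c * (\<Sum>s\<in>S. g1 n (wt s) z)" for z
  define B2 where "B2 z = c * (\<Sum>s\<in>S. g2 n (wt s) z)" for z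
  have dA: "(A has_real_derivative A1 x) (at x)" for x
    unfolding Aeq A1_def by (intro DERIV_sum d_p0)
  have dA1: "(A1 has_real_derivative A2 x) (at x)" for x
    unfolding A1_def[abs_def] A2_def by (intro DERIV_sum d_p1)
  have dB: "(B has_real_derivative B1 x) (at x)" for x
    unfolding Beq B1_def by (intro DERIV_cmult DERIV_sum d_g0)
  have dB1: "(B1 has_real_derivative B2 x) (at x)" for x
    unfolding B1_def[abs_def] B2_def by (intro DERIV_cmult DERIV_sum d_g1)
  have derA: "deriv A = A1" using dA DERIV_imp_deriv by blast
  have derB: "deriv B = B1" using dB DERIV_imp_deriv by blast
  have der2A: "(deriv ^^ 2) A (-1/2) = A2 (-1/2)"
    using DERIV_imp_deriv[OF dA1] by (simp add: numeral_2_eq_2 derA)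
  have der2B: "(deriv ^^ 2) B (-1/2) = B2 (-1/2)"
    using DERIV_imp_deriv[OF dB1] by (simp add: numeral_2_eq_2 derB)
  have claim1: "3 * A (-1/2) + B (-1/2) = 0"
  proof -
    have "3 * A (-1/2) + B (-1/2) = (\<Sum>s\<in>S. 3*(-1/2::real)^(wt s) + (1/3^(n-1)) * g0 n (wt s) (-1/2))"
      unfolding Aeq Beq c_def by (simp add: sum.distrib sum_distrib_left)
    also have "\<dots> = 0" using vals(1)[OF n_odd[folded n_def] wtn] by simp
    finally show ?thesis .
  qed
  have claim2: "3 * A2 (-1/2) + B2 (-1/2) = 8*(1 - real n)/3 * (3 * A1 (-1/2) + B1 (-1/2))"
  proof -
    have "3 * A2 (-1/2) + B2 (-1/2) = (\<Sum>s\<in>S. 3 * p2 (wt s) (-1/2) + (1/3^(n-1)) * g2 n (wt s) (-1/2))"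
      unfolding A2_def B2_def c_def by (simp add: sum.distrib sum_distrib_left)
    also have "\<dots> = (\<Sum>s\<in>S. 8*(1 - real n)/3 * (3 * p1 (wt s) (-1/2) + (1/3^(n-1)) * g1 n (wt s) (-1/2)))"
      by (rule sum.cong[OF refl]) (rule vals(2)[OF n_odd[folded n_def] wtn])
    also have "\<dots> = 8*(1 - real n)/3 * (\<Sum>s\<in>S. 3 * p1 (wt s) (-1/2) + (1/3^(n-1)) * g1 n (wt s) (-1/2))"
      by (rule sum_distrib_left[symmetric])
    also have "(\<Sum>s\<in>S. 3 * p1 (wt s) (-1/2) + (1/3^(n-1)) * g1 n (wt s) (-1/2)) = 3 * A1 (-1/2) + B1 (-1/2)"
      unfolding A1_def B1_def c_def by (simp add: sum.distrib sum_distrib_left)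
    finally show ?thesis .
  qed
  show ?thesis
  proof (intro conjI impI)
    show "3 * A (-1/2) + B (-1/2) = 0" by (rule claim1)
  next
    assume H: "B (-1/2) \<noteq> 0 \<and> 3 * deriv A (-1/2) + deriv B (-1/2) = 0"
    hence H1: "3 * A1 (-1/2) + B1 (-1/2) = 0" unfolding derA derB by simp
    have H2: "3 * A2 (-1/2) + B2 (-1/2) = 0" using claim2 H1 by simp
    show "3 * (deriv ^^ 2) A (-1/2) + (deriv ^^ 2) B (-1/2) = 0" unfolding der2A der2B by (rule H2)
    show "(\<lambda>e::real. let z = (3 - e) / (8 * e - 6) in 3 * (3 * A z + B z) / (4 * B z)) \<in> O[at 0](\<lambda>e. e ^ 3)"
    proof -
      define z0 :: real where "z0 = -1/2"
      define pp :: "real poly" where "pp = smult 3 (\<Sum>s\<in>S. monom 1 (wt s))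
          + smult c (\<Sum>s\<in>S. [:1,8:]^(n - wt s) * [:1,-1:]^(wt s))"
      have hp: "poly pp z = 3 * A z + B z" for z
      proof -
        have l: "poly [:1,8:] z = 1 + 8*z" "poly [:1,-1:] z = 1 - z" by simp_all
        show ?thesis unfolding pp_def Aeq Beq
          by (simp add: poly_sum poly_monom l g0_def mult.commute)
      qed
      have hpf: "poly pp = (\<lambda>z. 3 * A z + B z)" using hp by (simp add: fun_eq_iff)
      have dH: "((\<lambda>z. 3 * A z + B z) has_real_derivative 3 * A1 x + B1 x) (at x)" for x
        by (intro DERIV_add DERIV_cmult dA dB)
      have dH1: "((\<lambda>z. 3 * A1 z + B1 z) has_real_derivative 3 * A2 x + B2 x) (at x)" for x
        by (intro DERIV_add DERIV_cmult dA1 dB1)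
      have pd1: "poly (pderiv pp) x = 3 * A1 x + B1 x" for x
        using DERIV_unique[OF poly_DERIV[of pp x]] dH unfolding hpf by blast
      have pd1f: "poly (pderiv pp) = (\<lambda>z. 3 * A1 z + B1 z)" using pd1 by (simp add: fun_eq_iff)
      have pd2: "poly (pderiv (pderiv pp)) x = 3 * A2 x + B2 x" for x
        using DERIV_unique[OF poly_DERIV[of "pderiv pp" x]] dH1 unfolding pd1f by blast
      obtain M where M: "\<forall>x. \<bar>x - z0\<bar> \<le> 1 \<longrightarrow> \<bar>poly pp x\<bar> \<le> M * \<bar>x - z0\<bar>^3"
        using poly_cubic[of pp z0] hp pd1 pd2 claim1 H1 H2 unfolding z0_def by auto
      define zf :: "real \<Rightarrow> real" where "zf e = (3 - e) / (8 * e - 6)" for e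
      define \<beta> where "\<beta> = \<bar>B z0\<bar> / 2"
      have \<beta>pos: "\<beta> > 0" using H unfolding \<beta>_def z0_def by simp
      have ev1: "eventually (\<lambda>e::real. \<bar>e\<bar> < 1/8) (at 0)"
        unfolding eventually_at by (rule exI[where x="1/8"]) (auto simp: dist_real_def)
      have "(zf \<longlongrightarrow> zf 0) (at 0)" unfolding zf_def by (intro tendsto_intros) auto
      moreover have "zf 0 = z0" by (simp add: zf_def z0_def)
      ultimately have "((\<lambda>e. B (zf e)) \<longlongrightarrow> B z0) (at 0)"
        using isCont_tendsto_compose[OF DERIV_isCont[OF dB]] by metis
      hence "((\<lambda>e. \<bar>B (zf e)\<bar>) \<longlongrightarrow> \<bar>B z0\<bar>) (at 0)" by (rule tendsto_rabs)
      hence ev2: "eventually (\<lambda>e. \<beta> < \<bar>B (zf e)\<bar>) (at 0)"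
        by (rule order_tendstoD(1)) (use \<beta>pos in \<open>simp add: \<beta>_def\<close>)
      define C where "C = 3 * (\<bar>M\<bar> * (3/5)^3) / (4 * \<beta>)"
      have bound: "norm (3 * (3 * A (zf e) + B (zf e)) / (4 * B (zf e))) \<le> C * norm (e^3)"
        if e: "\<bar>e\<bar> < 1/8" and bz: "\<beta> < \<bar>B (zf e)\<bar>" for e :: real
      proof -
        have d: "8 * e - 6 < -5" using e by linarith
        have zc: "zf e - z0 = 3 * e / (8 * e - 6)" using d unfolding zf_def z0_def by (simp add: field_simps)
        have "\<bar>zf e - z0\<bar> = 3 * \<bar>e\<bar> / \<bar>8 * e - 6\<bar>" unfolding zc by (simp add: abs_divide abs_mult)
        also have "\<dots> \<le> 3 * \<bar>e\<bar> / 5" using d by (intro divide_left_mono) auto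
        finally have zb: "\<bar>zf e - z0\<bar> \<le> 3 * \<bar>e\<bar> / 5" .
        hence zb1: "\<bar>zf e - z0\<bar> \<le> 1" using e by linarith
        have "\<bar>3 * A (zf e) + B (zf e)\<bar> \<le> M * \<bar>zf e - z0\<bar>^3" using M zb1 hp by metis
        also have "\<dots> \<le> \<bar>M\<bar> * \<bar>zf e - z0\<bar>^3" by (intro mult_right_mono) auto
        also have "\<dots> \<le> \<bar>M\<bar> * (3 * \<bar>e\<bar> / 5)^3" by (intro mult_left_mono power_mono zb) auto
        finally have hb: "\<bar>3 * A (zf e) + B (zf e)\<bar> \<le> \<bar>M\<bar> * (3 * \<bar>e\<bar> / 5)^3" .
        have "norm (3 * (3 * A (zf e) + B (zf e)) / (4 * B (zf e)))
            = 3 * \<bar>3 * A (zf e) + B (zf e)\<bar> / (4 * \<bar>B (zf e)\<bar>)"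
          unfolding real_norm_def abs_divide abs_mult by simp
        also have "\<dots> \<le> 3 * (\<bar>M\<bar> * (3 * \<bar>e\<bar> / 5)^3) / (4 * \<beta>)"
          using hb bz \<beta>pos by (intro frac_le) auto
        also have "\<dots> = C * norm (e^3)" unfolding C_def by (simp add: power_abs field_simps)
        finally show ?thesis .
      qed
      have "eventually (\<lambda>e. norm (3 * (3 * A (zf e) + B (zf e)) / (4 * B (zf e))) \<le> C * norm (e^3)) (at (0::real))"
        using eventually_conj[OF ev1 ev2] by eventually_elim (use bound in blast)
      hence "(\<lambda>e. 3 * (3 * A (zf e) + B (zf e)) / (4 * B (zf e))) \<in> O[at 0](\<lambda>e. e ^ 3)"
        by (rule bigoI)
      thus ?thesis unfolding zf_def Let_def .
    qed
  qed
qed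


end
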